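(* Fix $k\in\mathbb{N}$ and let $Q$ be a class of $k$-degenerate graphs (closed under isomorphism). Then $P_Q$ is weakly distinguishing.
   Context: All graphs are finite and simple. A graph is $k$-degenerate if every induced subgraph has a vertex of degree at most $k$. For a class $Q$, $P_Q(G;X)=\sum_{A\subseteq V(G):\, G[A]\in Q}X^{|A|}$, where $G[A]$ is the induced subgraph on $A$. A graph $G$ is $P$-unique if every graph $H$ with $P(G)=P(H)$ is isomorphic to $G$. With $\mathcal{G}(n)$ the set of isomorphism classes of graphs on $n$ vertices and $U_P(n)$ the $P$-unique graphs in $\mathcal{G}(n)$, $P$ is weakly distinguishing if $\lim_{n\to\infty}|U_P(n)|/|\mathcal{G}(n)|=0$. *)

theory Defs
  imports Complex_Main "HOL-Computational_Algebra.Polynomial"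
begin

text \<open>A graph is a pair (V, E) of a finite vertex set of naturals and a symmetric,
  irreflexive edge relation on V. Every finite simple graph is isomorphic to one of these.\<close>
type_synonym graph = "nat set \<times> (nat \<times> nat) set"

definition wf_graph :: "graph \<Rightarrow> bool" where
  "wf_graph G \<longleftrightarrow> finite (fst G) \<and> snd G \<subseteq> fst G \<times> fst G \<and> sym (snd G)
     \<and> (\<forall>v. (v, v) \<notin> snd G)"

definition graph_iso :: "graph \<Rightarrow> graph \<Rightarrow> bool" where
  "graph_iso G H \<longleftrightarrow> (\<exists>f. bij_betw f (fst G) (fst H) \<and>
     (\<forall>u\<in>fst G. \<forall>v\<in>fst G. (u, v) \<in> snd G \<longleftrightarrow> (f u, f v) \<in> snd H))"

definition induced :: "graph \<Rightarrow> nat set \<Rightarrow> graph" where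
  "induced G A = (A, snd G \<inter> (A \<times> A))"

definition degree :: "graph \<Rightarrow> nat \<Rightarrow> nat" where
  "degree G v = card {u. (v, u) \<in> snd G}"

definition k_degenerate :: "nat \<Rightarrow> graph \<Rightarrow> bool" where
  "k_degenerate k G \<longleftrightarrow>
     (\<forall>A. A \<subseteq> fst G \<longrightarrow> A \<noteq> {} \<longrightarrow> (\<exists>v\<in>A. degree (induced G A) v \<le> k))"

definition indpoly :: "graph set \<Rightarrow> graph \<Rightarrow> nat poly" where
  "indpoly Q G = (\<Sum>A\<in>{A. A \<subseteq> fst G \<and> induced G A \<in> Q}. monom 1 (card A))"

definition P_unique :: "(graph \<Rightarrow> 'b) \<Rightarrow> graph \<Rightarrow> bool" where
  "P_unique P G \<longleftrightarrow> (\<forall>H. wf_graph H \<longrightarrow> P H = P G \<longrightarrow> graph_iso G H)"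

definition graphs_on :: "nat \<Rightarrow> graph set" where
  "graphs_on n = {G. wf_graph G \<and> fst G = {0..<n}}"

definition graph_classes :: "nat \<Rightarrow> graph set set" where
  "graph_classes n = (\<lambda>G. {H \<in> graphs_on n. graph_iso G H}) ` graphs_on n"

definition unique_classes :: "(graph \<Rightarrow> 'b) \<Rightarrow> nat \<Rightarrow> graph set set" where
  "unique_classes P n = {c \<in> graph_classes n. \<exists>G\<in>c. P_unique P G}"

definition weakly_distinguishing :: "(graph \<Rightarrow> 'b) \<Rightarrow> bool" where
  "weakly_distinguishing P \<longleftrightarrow>
     (\<lambda>n. real (card (unique_classes P n)) / real (card (graph_classes n))) \<longlonglongrightarrow> 0"

end

theory Submission
  imports Defs "HOL-Combinatorics.Permutations" "HOL-Real_Asymp.Real_Asymp"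
begin

lemma iso_sym:
  assumes "graph_iso G H" shows "graph_iso H G"
proof -
  obtain f where bf: "bij_betw f (fst G) (fst H)"
    and e: "\<forall>u\<in>fst G. \<forall>v\<in>fst G. (u, v) \<in> snd G \<longleftrightarrow> (f u, f v) \<in> snd H"
    using assms unfolding graph_iso_def by blast
  let ?g = "inv_into (fst G) f"
  have bg: "bij_betw ?g (fst H) (fst G)" using bf by (rule bij_betw_inv_into)
  have "\<forall>u\<in>fst H. \<forall>v\<in>fst H. (u, v) \<in> snd H \<longleftrightarrow> (?g u, ?g v) \<in> snd G"
  proof (intro ballI)
    fix u v assume u: "u \<in> fst H" and v: "v \<in> fst H"
    have gu: "?g u \<in> fst G" and gv: "?g v \<in> fst G" using bg u v bij_betwE by blast+
    have "f (?g u) = u" "f (?g v) = v" using bf u v by (simp_all add: bij_betw_inv_into_right)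
    moreover have "(?g u, ?g v) \<in> snd G \<longleftrightarrow> (f (?g u), f (?g v)) \<in> snd H" using e gu gv by blast
    ultimately show "(u, v) \<in> snd H \<longleftrightarrow> (?g u, ?g v) \<in> snd G" by simp
  qed
  then show ?thesis using bg unfolding graph_iso_def by blast
qed

lemma iso_trans:
  assumes "graph_iso G H" "graph_iso H K" shows "graph_iso G K"
proof -
  obtain f where bf: "bij_betw f (fst G) (fst H)"
    and e: "\<forall>u\<in>fst G. \<forall>v\<in>fst G. (u, v) \<in> snd G \<longleftrightarrow> (f u, f v) \<in> snd H"
    using assms(1) unfolding graph_iso_def by blast
  obtain g where bg: "bij_betw g (fst H) (fst K)"
    and e2: "\<forall>u\<in>fst H. \<forall>v\<in>fst H. (u, v) \<in> snd H \<longleftrightarrow> (g u, g v) \<in> snd K"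
    using assms(2) unfolding graph_iso_def by blast
  have "bij_betw (g \<circ> f) (fst G) (fst K)" using bf bg by (rule bij_betw_trans)
  moreover have "\<forall>u\<in>fst G. \<forall>v\<in>fst G. (u, v) \<in> snd G \<longleftrightarrow> ((g \<circ> f) u, (g \<circ> f) v) \<in> snd K"
  proof (intro ballI)
    fix u v assume u: "u \<in> fst G" and v: "v \<in> fst G"
    have fu: "f u \<in> fst H" and fv: "f v \<in> fst H" using bf u v bij_betwE by blast+
    have "(u, v) \<in> snd G \<longleftrightarrow> (f u, f v) \<in> snd H" using e u v by blast
    also have "\<dots> \<longleftrightarrow> (g (f u), g (f v)) \<in> snd K" using e2 fu fv by blast
    finally show "(u, v) \<in> snd G \<longleftrightarrow> ((g \<circ> f) u, (g \<circ> f) v) \<in> snd K" by simp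
  qed
  ultimately show ?thesis unfolding graph_iso_def by blast
qed

lemma iso_refl: "graph_iso G G"
  unfolding graph_iso_def by (rule exI[of _ id]) auto

lemma finite_graphs_on: "finite (graphs_on n)"
proof -
  have "graphs_on n \<subseteq> {{0..<n}} \<times> Pow ({0..<n} \<times> {0..<n})"
    unfolding graphs_on_def wf_graph_def by auto
  then show ?thesis by (rule finite_subset) auto
qed

lemma class_size:
  assumes G: "G \<in> graphs_on n"
  shows "card {H \<in> graphs_on n. graph_iso G H} \<le> fact n"
proof -
  let ?S = "{0..<n::nat}"
  let ?pf = "\<lambda>p. (?S, (\<lambda>(u,v). (p u, p v)) ` snd G)"
  have sub: "{H \<in> graphs_on n. graph_iso G H} \<subseteq> ?pf ` {p. p permutes ?S}"
  proof
    fix H assume "H \<in> {H \<in> graphs_on n. graph_iso G H}"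
    then have H: "H \<in> graphs_on n" and iso: "graph_iso G H" by auto
    have fG: "fst G = ?S" and fH: "fst H = ?S" using G H unfolding graphs_on_def by auto
    have sG: "snd G \<subseteq> ?S \<times> ?S" and sH: "snd H \<subseteq> ?S \<times> ?S"
      using G H unfolding graphs_on_def wf_graph_def by auto
    obtain f where bf: "bij_betw f ?S ?S"
      and e: "\<forall>u\<in>?S. \<forall>v\<in>?S. (u, v) \<in> snd G \<longleftrightarrow> (f u, f v) \<in> snd H"
      using iso fG fH unfolding graph_iso_def by auto
    define p where "p = (\<lambda>x. if x \<in> ?S then f x else x)"
    have bp: "bij_betw p ?S ?S" using bf unfolding p_def bij_betw_def inj_on_def by auto
    have pp: "p permutes ?S" by (rule bij_imp_permutes[OF bp]) (simp add: p_def)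
    have "snd H = (\<lambda>(u,v). (p u, p v)) ` snd G"
    proof
      show "snd H \<subseteq> (\<lambda>(u,v). (p u, p v)) ` snd G"
      proof
        fix x assume x: "x \<in> snd H"
        obtain a b where ab: "x = (a, b)" by (cases x)
        have a: "a \<in> ?S" and b: "b \<in> ?S" using x ab sH by auto
        obtain u where u: "u \<in> ?S" "f u = a" using bf a unfolding bij_betw_def by (metis imageE)
        obtain v where v: "v \<in> ?S" "f v = b" using bf b unfolding bij_betw_def by (metis imageE)
        have "(u, v) \<in> snd G" using e u v x ab by auto
        moreover have "x = (p u, p v)" using u v ab p_def by auto
        ultimately show "x \<in> (\<lambda>(u,v). (p u, p v)) ` snd G" by force
      qed
    next
      show "(\<lambda>(u,v). (p u, p v)) ` snd G \<subseteq> snd H"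
      proof
        fix x assume "x \<in> (\<lambda>(u,v). (p u, p v)) ` snd G"
        then obtain u v where uv: "(u, v) \<in> snd G" "x = (p u, p v)" by auto
        have "u \<in> ?S" "v \<in> ?S" using uv sG by auto
        then show "x \<in> snd H" using e uv p_def by auto
      qed
    qed
    then have "H = ?pf p" using fH by (metis prod.collapse)
    then show "H \<in> ?pf ` {p. p permutes ?S}" using pp by blast
  qed
  have "card {H \<in> graphs_on n. graph_iso G H} \<le> card (?pf ` {p. p permutes ?S})"
    by (rule card_mono[OF _ sub]) (simp add: finite_permutations)
  also have "\<dots> \<le> card {p. p permutes ?S}" by (rule card_image_le) (simp add: finite_permutations)
  also have "\<dots> = fact n" by (simp add: card_permutations)
  finally show ?thesis .
qed

definition UB :: "nat set \<Rightarrow> (nat \<times> nat) set" where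
  "UB B = {(u, v). u \<in> B \<and> v \<in> B \<and> u < v}"

lemma finite_UB: "finite B \<Longrightarrow> finite (UB B)"
  unfolding UB_def by (rule finite_subset[of _ "B \<times> B"]) auto

lemma card_UB: assumes "finite B" shows "2 * card (UB B) + card B = card B * card B"
proof -
  let ?L = "{(u, v). u \<in> B \<and> v \<in> B \<and> v < u}"
  let ?D = "{(u, v). u \<in> B \<and> v \<in> B \<and> u = v}"
  have eq: "B \<times> B = (UB B \<union> ?L) \<union> ?D" unfolding UB_def by auto
  have fL: "finite ?L" by (rule finite_subset[of _ "B \<times> B"]) (use assms in auto)
  have fD: "finite ?D" by (rule finite_subset[of _ "B \<times> B"]) (use assms in auto)
  have cL: "card ?L = card (UB B)"
  proof -
    have "?L = (\<lambda>(u,v). (v,u)) ` UB B" unfolding UB_def by auto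
    moreover have "inj_on (\<lambda>(u,v). (v,u)) (UB B)" unfolding inj_on_def by auto
    ultimately show ?thesis by (simp add: card_image)
  qed
  have cD: "card ?D = card B"
  proof -
    have "?D = (\<lambda>u. (u,u)) ` B" by auto
    moreover have "inj_on (\<lambda>u. (u,u)) B" unfolding inj_on_def by auto
    ultimately show ?thesis by (simp add: card_image)
  qed
  have "card (B \<times> B) = card (UB B \<union> ?L) + card ?D"
    unfolding eq by (rule card_Un_disjoint) (use fL fD finite_UB[OF assms] in \<open>auto simp: UB_def\<close>)
  also have "card (UB B \<union> ?L) = card (UB B) + card ?L"
    by (rule card_Un_disjoint) (use fL finite_UB[OF assms] in \<open>auto simp: UB_def\<close>)
  finally show ?thesis using cL cD by (simp add: card_cartesian_product)
qed

lemma graphs_lower: "2 ^ card (UB {0..<n}) \<le> card (graphs_on n)"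
proof -
  let ?U = "UB {0..<n}"
  let ?g = "\<lambda>S. ({0..<n::nat}, S \<union> S\<inverse>)"
  have inj: "inj_on ?g (Pow ?U)"
  proof (rule inj_onI)
    fix S T assume S: "S \<in> Pow ?U" and T: "T \<in> Pow ?U" and eq: "?g S = ?g T"
    have "S = (S \<union> S\<inverse>) \<inter> ?U" using S unfolding UB_def by auto
    also have "\<dots> = (T \<union> T\<inverse>) \<inter> ?U" using eq by simp
    also have "\<dots> = T" using T unfolding UB_def by auto
    finally show "S = T" .
  qed
  have "?g ` Pow ?U \<subseteq> graphs_on n"
    unfolding graphs_on_def wf_graph_def UB_def sym_def by auto
  then have "card (?g ` Pow ?U) \<le> card (graphs_on n)" by (rule card_mono[OF finite_graphs_on])
  moreover have "card (?g ` Pow ?U) = 2 ^ card ?U"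
    using inj finite_UB[of "{0..<n}"] by (simp add: card_image card_Pow)
  ultimately show ?thesis by simp
qed

lemma classes_lower: "2 ^ card (UB {0..<n}) \<le> card (graph_classes n) * fact n"
proof -
  have un: "graphs_on n = \<Union> (graph_classes n)"
    unfolding graph_classes_def using iso_refl by blast
  have fin: "finite (graph_classes n)" unfolding graph_classes_def using finite_graphs_on by simp
  have "card (graphs_on n) \<le> sum card (graph_classes n)"
    unfolding un by (rule card_Union_le_sum_card)
  also have "\<dots> \<le> card (graph_classes n) * fact n"
  proof (rule sum_bounded_above[of "graph_classes n" card "fact n", simplified])
    fix c assume "c \<in> graph_classes n"
    then show "card c \<le> fact n" using class_size unfolding graph_classes_def by blast
  qed
  finally show ?thesis using graphs_lower[of n] by linarith
qed


definition kd :: "nat \<Rightarrow> graph \<Rightarrow> nat set \<Rightarrow> bool" where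
  "kd k G B \<longleftrightarrow> (\<forall>A. A \<subseteq> B \<longrightarrow> A \<noteq> {} \<longrightarrow> (\<exists>v\<in>A. degree (induced G A) v \<le> k))"

lemma edge_bound:
  assumes "finite B" "sym (snd G)" "kd k G B"
  shows "card (snd G \<inter> UB B) \<le> k * card B"
  using assms(1,3)
proof (induction "card B" arbitrary: B)
  case 0
  then have "B = {}" by simp
  then show ?case by (simp add: UB_def)
next
  case (Suc c)
  then have ne: "B \<noteq> {}" by auto
  obtain v where v: "v \<in> B" "degree (induced G B) v \<le> k"
    using Suc.prems(2) ne unfolding kd_def by blast
  let ?B' = "B - {v}"
  have c: "c = card ?B'" using Suc.hyps(2) v(1) Suc.prems(1) by simp
  have kd': "kd k G ?B'" using Suc.prems(2) unfolding kd_def by blast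
  have IH: "card (snd G \<inter> UB ?B') \<le> k * card ?B'"
    using Suc.hyps(1)[OF c] Suc.prems(1) kd' by simp
  let ?X = "{p \<in> snd G \<inter> UB B. fst p = v \<or> snd p = v}"
  let ?h = "\<lambda>p. if fst p = v then snd p else fst p"
  let ?N = "{u. (v, u) \<in> snd G \<inter> B \<times> B}"
  have finN: "finite ?N" by (rule finite_subset[of _ B]) (use Suc.prems(1) in auto)
  have inj: "inj_on ?h ?X"
    by (rule inj_onI) (auto simp: UB_def split: if_splits)
  have img: "?h ` ?X \<subseteq> ?N"
    using assms(2) unfolding UB_def sym_def by (auto split: if_splits)
  have "card ?X = card (?h ` ?X)" using inj by (rule card_image[symmetric])
  also have "\<dots> \<le> card ?N" by (rule card_mono[OF finN img])
  also have "\<dots> = degree (induced G B) v" unfolding degree_def induced_def by simp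
  finally have cX: "card ?X \<le> k" using v(2) by simp
  have sub: "snd G \<inter> UB B \<subseteq> (snd G \<inter> UB ?B') \<union> ?X" unfolding UB_def by auto
  have finU: "finite (snd G \<inter> UB ?B')" using finite_UB[of ?B'] Suc.prems(1) by auto
  have finX: "finite ?X" using finite_UB[of B] Suc.prems(1) by auto
  have "card (snd G \<inter> UB B) \<le> card ((snd G \<inter> UB ?B') \<union> ?X)"
    by (rule card_mono[OF _ sub]) (use finU finX in auto)
  also have "\<dots> \<le> card (snd G \<inter> UB ?B') + card ?X" by (rule card_Un_le)
  also have "\<dots> \<le> k * card ?B' + k" using IH cX by simp
  also have "\<dots> = k * card B" using c Suc.hyps(2) by (metis mult_Suc_right add.commute)
  finally show ?case .
qed


lemma small_subsets:
  assumes "finite W"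
  shows "card {T. T \<subseteq> W \<and> card T \<le> t} \<le> (t + 1) * (card W + 1) ^ t"
proof -
  have eq: "{T. T \<subseteq> W \<and> card T \<le> t} = (\<Union>i\<in>{..t}. {T. T \<subseteq> W \<and> card T = i})" by auto
  have "card {T. T \<subseteq> W \<and> card T \<le> t} \<le> (\<Sum>i\<in>{..t}. card {T. T \<subseteq> W \<and> card T = i})"
    unfolding eq by (rule card_UN_le) simp
  also have "\<dots> = (\<Sum>i\<in>{..t}. card W choose i)" using assms by (simp add: n_subsets)
  also have "\<dots> \<le> (\<Sum>i\<in>{..t}. (card W + 1) ^ t)"
  proof (rule sum_mono)
    fix i assume i: "i \<in> {..t}"
    show "card W choose i \<le> (card W + 1) ^ t"
    proof (cases "i \<le> card W")
      case True
      have "card W choose i \<le> card W ^ i" by (rule binomial_le_pow[OF True])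
      also have "\<dots> \<le> (card W + 1) ^ i" by (rule power_mono) auto
      also have "\<dots> \<le> (card W + 1) ^ t" by (rule power_increasing) (use i in auto)
      finally show ?thesis .
    next
      case False then show ?thesis by (simp add: binomial_eq_0)
    qed
  qed
  also have "\<dots> = (t + 1) * (card W + 1) ^ t" by simp
  finally show ?thesis .
qed

lemma snd_recover:
  assumes "G \<in> graphs_on n"
  shows "snd G = (snd G \<inter> UB {0..<n}) \<union> (snd G \<inter> UB {0..<n})\<inverse>"
proof -
  have w: "wf_graph G" "fst G = {0..<n}" using assms unfolding graphs_on_def by auto
  have s: "snd G \<subseteq> {0..<n} \<times> {0..<n}" "sym (snd G)" "\<forall>v. (v, v) \<notin> snd G"
    using w unfolding wf_graph_def by auto
  show ?thesis
  proof
    show "snd G \<subseteq> (snd G \<inter> UB {0..<n}) \<union> (snd G \<inter> UB {0..<n})\<inverse>"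
    proof
      fix x assume x: "x \<in> snd G"
      obtain a b where ab: "x = (a, b)" by (cases x)
      have "a \<noteq> b" using s(3) x ab by auto
      moreover have "a < n" "b < n" using s(1) x ab by auto
      moreover have "(b, a) \<in> snd G" using s(2) x ab unfolding sym_def by auto
      ultimately show "x \<in> (snd G \<inter> UB {0..<n}) \<union> (snd G \<inter> UB {0..<n})\<inverse>"
        using x ab unfolding UB_def by (cases "a < b") auto
    qed
  next
    show "(snd G \<inter> UB {0..<n}) \<union> (snd G \<inter> UB {0..<n})\<inverse> \<subseteq> snd G"
      using s(2) unfolding sym_def by auto
  qed
qed

lemma count_B:
  assumes B: "B \<subseteq> {0..<n}"
  shows "card {G \<in> graphs_on n. card (snd G \<inter> UB B) \<le> t}
     \<le> (t + 1) * (card (UB B) + 1) ^ t * 2 ^ (card (UB {0..<n}) - card (UB B))"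
proof -
  let ?U = "UB {0..<n}" and ?W = "UB B"
  have WU: "?W \<subseteq> ?U" using B unfolding UB_def by auto
  have finU: "finite ?U" by (rule finite_UB) simp
  have finW: "finite ?W" using finite_subset[OF WU finU] .
  let ?psi = "\<lambda>G. (snd G \<inter> ?W, snd G \<inter> (?U - ?W))"
  let ?S = "{G \<in> graphs_on n. card (snd G \<inter> ?W) \<le> t}"
  have inj: "inj_on ?psi ?S"
  proof (rule inj_onI)
    fix G H assume G: "G \<in> ?S" and H: "H \<in> ?S" and eq: "?psi G = ?psi H"
    have "snd G \<inter> ?U = (snd G \<inter> ?W) \<union> (snd G \<inter> (?U - ?W))" using WU by auto
    also have "\<dots> = (snd H \<inter> ?W) \<union> (snd H \<inter> (?U - ?W))" using eq by simp
    also have "\<dots> = snd H \<inter> ?U" using WU by auto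
    finally have e: "snd G \<inter> ?U = snd H \<inter> ?U" .
    have "snd G = snd H" using snd_recover[of G n] snd_recover[of H n] G H e by simp
    moreover have "fst G = fst H" using G H unfolding graphs_on_def by simp
    ultimately show "G = H" by (simp add: prod_eq_iff)
  qed
  have img: "?psi ` ?S \<subseteq> {T. T \<subseteq> ?W \<and> card T \<le> t} \<times> Pow (?U - ?W)" by auto
  have "card ?S = card (?psi ` ?S)" using inj by (simp add: card_image)
  also have "\<dots> \<le> card ({T. T \<subseteq> ?W \<and> card T \<le> t} \<times> Pow (?U - ?W))"
    by (rule card_mono[OF _ img]) (use finW finU in auto)
  also have "\<dots> = card {T. T \<subseteq> ?W \<and> card T \<le> t} * 2 ^ (card ?U - card ?W)"
    using finU finW WU by (simp add: card_cartesian_product card_Pow card_Diff_subset)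
  also have "\<dots> \<le> (t + 1) * (card ?W + 1) ^ t * 2 ^ (card ?U - card ?W)"
    using small_subsets[OF finW, of t] by simp
  finally show ?thesis .
qed


definition bad :: "graph set \<Rightarrow> nat \<Rightarrow> nat \<Rightarrow> graph set" where
  "bad Q m n = {G \<in> graphs_on n. \<exists>A. A \<subseteq> fst G \<and> induced G A \<in> Q \<and> m \<le> card A}"

lemma induced_induced: "A' \<subseteq> A \<Longrightarrow> induced (induced G A) A' = induced G A'"
  unfolding induced_def by auto

lemma kd_of_degenerate:
  assumes "k_degenerate k (induced G A)" "B \<subseteq> A"
  shows "kd k G B"
  unfolding kd_def
proof (intro allI impI)
  fix A' assume A': "A' \<subseteq> B" "A' \<noteq> {}"
  have "A' \<subseteq> fst (induced G A)" using A' assms(2) by (simp add: induced_def)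
  then obtain v where "v \<in> A'" "degree (induced (induced G A) A') v \<le> k"
    using assms(1) A'(2) unfolding k_degenerate_def by blast
  moreover have "induced (induced G A) A' = induced G A'"
    using A'(1) assms(2) by (intro induced_induced) auto
  ultimately show "\<exists>v\<in>A'. degree (induced G A') v \<le> k" by auto
qed

lemma card_UB_eq: assumes "finite B" shows "card (UB B) = (card B * card B - card B) div 2"
proof -
  have "card B * card B - card B = 2 * card (UB B)" using card_UB[OF assms] by linarith
  then show ?thesis by simp
qed

lemma bad_bound:
  assumes Q: "\<forall>G\<in>Q. wf_graph G \<and> k_degenerate k G"
  shows "card (bad Q m n) \<le> (n choose m) *
    ((k * m + 1) * ((m * m - m) div 2 + 1) ^ (k * m) * 2 ^ (card (UB {0..<n}) - (m * m - m) div 2))"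
proof -
  let ?I = "{B. B \<subseteq> {0..<n} \<and> card B = m}"
  let ?F = "\<lambda>B. {G \<in> graphs_on n. card (snd G \<inter> UB B) \<le> k * m}"
  let ?K = "(k * m + 1) * ((m * m - m) div 2 + 1) ^ (k * m) * 2 ^ (card (UB {0..<n}) - (m * m - m) div 2)"
  have sub: "bad Q m n \<subseteq> (\<Union>B\<in>?I. ?F B)"
  proof
    fix G assume "G \<in> bad Q m n"
    then obtain A where G: "G \<in> graphs_on n" and A: "A \<subseteq> fst G" "induced G A \<in> Q" "m \<le> card A"
      unfolding bad_def by blast
    have fG: "fst G = {0..<n}" and wG: "wf_graph G" using G unfolding graphs_on_def by auto
    have finA: "finite A" using A(1) fG finite_subset by auto
    obtain B where B: "B \<subseteq> A" "card B = m" using obtain_subset_with_card_n[OF A(3)] by metis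
    have finB: "finite B" using finA B(1) finite_subset by auto
    have "kd k G B" using kd_of_degenerate[OF _ B(1)] A(2) Q by blast
    then have "card (snd G \<inter> UB B) \<le> k * card B"
      using edge_bound[OF finB] wG unfolding wf_graph_def by blast
    then have "G \<in> ?F B" using G B by simp
    moreover have "B \<in> ?I" using B A(1) fG by auto
    ultimately show "G \<in> (\<Union>B\<in>?I. ?F B)" by blast
  qed
  have finI: "finite ?I" by simp
  have "card (bad Q m n) \<le> card (\<Union>B\<in>?I. ?F B)"
    by (rule card_mono[OF _ sub]) (auto intro: finite_subset[OF _ finite_graphs_on])
  also have "\<dots> \<le> (\<Sum>B\<in>?I. card (?F B))" by (rule card_UN_le[OF finI])
  also have "\<dots> \<le> (\<Sum>B\<in>?I. ?K)"
  proof (rule sum_mono)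
    fix B assume B: "B \<in> ?I"
    then have finB: "finite B" using finite_subset by auto
    have "card (UB B) = (m * m - m) div 2" using card_UB_eq[OF finB] B by simp
    then show "card (?F B) \<le> ?K" using count_B[of B n "k * m"] B by simp
  qed
  also have "\<dots> = (n choose m) * ?K" by (simp add: n_subsets)
  finally show ?thesis .
qed


lemma coeff_indpoly:
  assumes "finite (fst G)"
  shows "coeff (indpoly Q G) j = card {A. A \<subseteq> fst G \<and> induced G A \<in> Q \<and> card A = j}"
proof -
  let ?S = "{A. A \<subseteq> fst G \<and> induced G A \<in> Q}"
  have fin: "finite ?S" by (rule finite_subset[of _ "Pow (fst G)"]) (use assms in auto)
  have "coeff (indpoly Q G) j = (\<Sum>A\<in>?S. if card A = j then 1 else 0)"
    unfolding indpoly_def coeff_sum coeff_monom by simp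
  also have "\<dots> = (\<Sum>A\<in>{A \<in> ?S. card A = j}. 1)" using sum.inter_filter[OF fin, of "\<lambda>_. 1::nat" "\<lambda>A. card A = j"] by simp
  also have "\<dots> = card {A \<in> ?S. card A = j}" by simp
  also have "{A \<in> ?S. card A = j} = {A. A \<subseteq> fst G \<and> induced G A \<in> Q \<and> card A = j}" by auto
  finally show ?thesis .
qed

definition PS :: "nat \<Rightarrow> nat \<Rightarrow> nat poly set" where
  "PS m n = {p. (\<forall>j. m \<le> j \<longrightarrow> coeff p j = 0) \<and> (\<forall>j. coeff p j \<le> 2 ^ n)}"

lemma card_PS: "card (PS m n) \<le> (2 ^ n + 1) ^ m \<and> finite (PS m n)"
proof -
  let ?f = "\<lambda>p. restrict (coeff p) {..<m}"
  have inj: "inj_on ?f (PS m n)"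
  proof (rule inj_onI)
    fix p q assume p: "p \<in> PS m n" and q: "q \<in> PS m n" and e: "?f p = ?f q"
    show "p = q"
    proof (rule poly_eqI)
      fix j show "coeff p j = coeff q j"
      proof (cases "j < m")
        case True then show ?thesis using fun_cong[OF e, of j] by simp
      next
        case False then show ?thesis using p q unfolding PS_def by simp
      qed
    qed
  qed
  have img: "?f ` PS m n \<subseteq> PiE {..<m} (\<lambda>_. {0..2 ^ n})"
  proof (rule image_subsetI)
    fix p assume p: "p \<in> PS m n"
    show "?f p \<in> PiE {..<m} (\<lambda>_. {0..2 ^ n})"
      by (rule iffD2[OF restrict_PiE_iff]) (use p in \<open>simp add: PS_def\<close>)
  qed
  have "card (PS m n) \<le> card (PiE {..<m} (\<lambda>_. {0..(2::nat) ^ n}))"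
    by (rule card_inj_on_le[OF inj img]) (simp add: finite_PiE)
  also have "\<dots> = (2 ^ n + 1) ^ m" by (simp add: card_PiE)
  finally have "card (PS m n) \<le> (2 ^ n + 1) ^ m" .
  moreover have "finite (PS m n)"
    by (rule finite_imageD[OF finite_subset[OF img] inj]) (simp add: finite_PiE)
  ultimately show ?thesis by blast
qed

lemma good_in_PS:
  assumes G: "G \<in> graphs_on n" "G \<notin> bad Q m n"
  shows "indpoly Q G \<in> PS m n"
proof -
  have fG: "fst G = {0..<n}" using G(1) unfolding graphs_on_def by auto
  have c: "coeff (indpoly Q G) j = card {A. A \<subseteq> fst G \<and> induced G A \<in> Q \<and> card A = j}" for j
    using coeff_indpoly[of G Q j] fG by simp
  have "coeff (indpoly Q G) j = 0" if "m \<le> j" for j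
  proof -
    have "{A. A \<subseteq> fst G \<and> induced G A \<in> Q \<and> card A = j} = {}"
      using G that unfolding bad_def by auto
    then show ?thesis by (simp only: c card.empty)
  qed
  moreover have "coeff (indpoly Q G) j \<le> 2 ^ n" for j
  proof -
    have "card {A. A \<subseteq> fst G \<and> induced G A \<in> Q \<and> card A = j} \<le> card (Pow {0..<n})"
      by (rule card_mono) (auto simp: fG)
    then show ?thesis using c by (simp add: card_Pow)
  qed
  ultimately show ?thesis unfolding PS_def by blast
qed

lemma cls_eq:
  assumes c1: "c1 \<in> graph_classes n" and c2: "c2 \<in> graph_classes n"
    and G1: "G1 \<in> c1" and G2: "G2 \<in> c2" and iso: "graph_iso G1 G2"
  shows "c1 = c2"
proof -
  obtain X1 where X1: "c1 = {H \<in> graphs_on n. graph_iso X1 H}" using c1 unfolding graph_classes_def by blast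
  obtain X2 where X2: "c2 = {H \<in> graphs_on n. graph_iso X2 H}" using c2 unfolding graph_classes_def by blast
  have "graph_iso X1 G1" "graph_iso X2 G2" using G1 G2 X1 X2 by auto
  then have i12: "graph_iso X1 X2" using iso by (meson iso_sym iso_trans)
  then have "graph_iso X1 H \<longleftrightarrow> graph_iso X2 H" for H by (meson iso_sym iso_trans)
  then show ?thesis using X1 X2 by auto
qed

lemma unique_bound:
  shows "card (unique_classes (indpoly Q) n) \<le> card (bad Q m n) + (2 ^ n + 1) ^ m"
proof -
  let ?UC = "unique_classes (indpoly Q) n"
  define r where "r c = (SOME G. G \<in> c \<and> P_unique (indpoly Q) G)" for c
  have r: "r c \<in> c \<and> P_unique (indpoly Q) (r c)" if "c \<in> ?UC" for c
    using that unfolding unique_classes_def r_def by (metis (mono_tags, lifting) mem_Collect_eq someI)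
  have cl: "c \<in> graph_classes n" if "c \<in> ?UC" for c using that unfolding unique_classes_def by auto
  have rg: "r c \<in> graphs_on n" if "c \<in> ?UC" for c
    using r[OF that] cl[OF that] unfolding graph_classes_def by auto
  let ?U1 = "{c \<in> ?UC. r c \<in> bad Q m n}" and ?U2 = "{c \<in> ?UC. r c \<notin> bad Q m n}"
  have finbad: "finite (bad Q m n)"
    by (rule finite_subset[OF _ finite_graphs_on[of n]]) (auto simp: bad_def)
  have "card ?U1 \<le> card (bad Q m n)"
  proof (rule card_inj_on_le[OF _ _ finbad])
    show "inj_on r ?U1"
    proof (rule inj_onI)
      fix c1 c2 assume a: "c1 \<in> ?U1" "c2 \<in> ?U1" "r c1 = r c2"
      have "r c1 \<in> c1" "r c2 \<in> c2" using a(1,2) r by auto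
      then have "r c1 \<in> c1" "r c1 \<in> c2" using a(3) by auto
      then show "c1 = c2" using cls_eq[OF cl cl, of c1 c2 "r c1" "r c1"] a iso_refl by auto
    qed
  qed auto
  moreover have "card ?U2 \<le> card (PS m n)"
  proof (rule card_inj_on_le[of "\<lambda>c. indpoly Q (r c)"])
    show "inj_on (\<lambda>c. indpoly Q (r c)) ?U2"
    proof (rule inj_onI)
      fix c1 c2 assume a: "c1 \<in> ?U2" "c2 \<in> ?U2" "indpoly Q (r c1) = indpoly Q (r c2)"
      have "wf_graph (r c2)" using rg a(2) unfolding graphs_on_def by auto
      moreover have "P_unique (indpoly Q) (r c1)" using r[of c1] a(1) by auto
      ultimately have "graph_iso (r c1) (r c2)" using a(3) unfolding P_unique_def by metis
      then show "c1 = c2" using cls_eq[OF cl cl, of c1 c2 "r c1" "r c2"] a r by auto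
    qed
    show "(\<lambda>c. indpoly Q (r c)) ` ?U2 \<subseteq> PS m n"
    proof (rule image_subsetI)
      fix c assume "c \<in> ?U2"
      then show "indpoly Q (r c) \<in> PS m n" using good_in_PS[OF rg] by blast
    qed
    show "finite (PS m n)" using card_PS by blast
  qed
  moreover have "card ?UC \<le> card ?U1 + card ?U2"
  proof -
    have "?UC = ?U1 \<union> ?U2" by auto
    then have "card ?UC = card (?U1 \<union> ?U2)" by (rule arg_cong)
    also have "\<dots> \<le> card ?U1 + card ?U2" by (rule card_Un_le)
    finally show ?thesis .
  qed
  ultimately show ?thesis using card_PS[of m n] by linarith
qed


lemma nat_bound1:
  fixes n k m w :: nat
  assumes n: "2 \<le> n" and m: "m \<le> n div 4" and w: "w = (m * m - m) div 2"
  shows "(n choose m) * (k * m + 1) * (w + 1) ^ (k * m) * fact n \<le> n ^ ((3 * k + 2) * n)"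
proof -
  have mn: "m < n" using m n by auto
  have a: "n choose m \<le> n ^ n"
  proof -
    have "n choose m \<le> n ^ m" by (rule binomial_le_pow) (use mn in auto)
    also have "\<dots> \<le> n ^ n" by (rule power_increasing) (use mn n in auto)
    finally show ?thesis .
  qed
  have b: "k * m + 1 \<le> n ^ (k * n)"
  proof -
    have "k * m < 2 ^ (k * m)" by (rule less_exp)
    then have "k * m + 1 \<le> 2 ^ (k * m)" by linarith
    also have "\<dots> \<le> n ^ (k * m)" by (rule power_mono) (use n in auto)
    also have "\<dots> \<le> n ^ (k * n)" by (rule power_increasing) (use mn n in auto)
    finally show ?thesis .
  qed
  have c: "(w + 1) ^ (k * m) \<le> n ^ (2 * k * n)"
  proof -
    have "w \<le> m * m" using w by simp
    moreover have "m * m < n * n" using mn by (simp add: mult_strict_mono)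
    ultimately have "w + 1 \<le> n * n" by linarith
    then have "(w + 1) ^ (k * m) \<le> (n * n) ^ (k * m)" by (rule power_mono) simp
    also have "\<dots> = n ^ (2 * (k * m))" by (simp add: power_mult power2_eq_square)
    also have "\<dots> \<le> n ^ (2 * k * n)" by (rule power_increasing) (use mn n in auto)
    finally show ?thesis .
  qed
  have d: "fact n \<le> n ^ n" using fact_le_power[of n, where 'a=nat] by simp
  have "(n choose m) * (k * m + 1) * (w + 1) ^ (k * m) * fact n
      \<le> n ^ n * n ^ (k * n) * n ^ (2 * k * n) * n ^ n"
    using a b c d by (intro mult_mono) auto
  also have "\<dots> = n ^ ((3 * k + 2) * n)"
    by (simp add: power_add[symmetric] algebra_simps)
  finally show ?thesis .
qed

lemma nat_bound2:
  fixes n m :: nat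
  shows "(2 ^ n + 1) ^ m * fact n \<le> 2 ^ ((n + 1) * m) * n ^ n"
proof -
  have "(2 ^ n + 1) ^ m \<le> ((2::nat) ^ (n + 1)) ^ m" by (rule power_mono) auto
  also have "\<dots> = 2 ^ ((n + 1) * m)" by (rule power_mult[symmetric])
  finally show ?thesis using fact_le_power[of n, where 'a=nat] by (intro mult_mono) auto
qed


lemma pow_exp: "0 < (x::real) \<Longrightarrow> x ^ N = exp (real N * ln x)"
  by (simp add: exp_of_nat_mult)

lemma aux_lin: "(a - b) * (l::real) \<le> (- x / 4) * l \<Longrightarrow> a * l - b * l \<le> - (l * x / 4)"
  by (simp add: algebra_simps)

lemma ratio_bound:
  assumes Q: "\<forall>G\<in>Q. wf_graph G \<and> k_degenerate k G" and n: "16 \<le> n"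
  shows "real (card (unique_classes (indpoly Q) n)) / real (card (graph_classes n))
    \<le> exp ((3 * real k + 2) * real n * ln (real n) - ln 2 * (real n)^2 / 128)
      + exp (real n * ln (real n) - ln 2 * ((real n)^2 - 3 * real n) / 4)"
proof -
  define m where "m = n div 4"
  define u where "u = card (UB {0..<n})"
  define w where "w = (m * m - m) div 2"
  define N1 where "N1 = (3 * k + 2) * n"
  define bd where "bd = card (bad Q m n)"
  define UC where "UC = card (unique_classes (indpoly Q) n)"
  define cls where "cls = card (graph_classes n)"
  have uc: "UC \<le> bd + (2 ^ n + 1) ^ m" unfolding UC_def bd_def by (rule unique_bound)
  have bb: "bd \<le> (n choose m) * ((k * m + 1) * (w + 1) ^ (k * m) * 2 ^ (u - w))"
    unfolding bd_def u_def w_def by (rule bad_bound[OF Q])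
  have cl: "2 ^ u \<le> cls * fact n" unfolding u_def cls_def by (rule classes_lower)
  have u2: "2 * u + n = n * n" using card_UB[of "{0..<n}"] unfolding u_def by simp
  have wm: "w = card (UB {0..<m})" using card_UB_eq[of "{0..<m}"] unfolding w_def by simp
  have w2: "2 * w + m = m * m" using card_UB[of "{0..<m}"] wm by simp
  have wu: "w \<le> u" unfolding wm u_def
    by (rule card_mono[OF finite_UB]) (auto simp: UB_def m_def)
  have e1: "(n choose m) * (k * m + 1) * (w + 1) ^ (k * m) * fact n \<le> n ^ N1"
    unfolding N1_def by (rule nat_bound1) (use n in \<open>auto simp: m_def w_def\<close>)
  have e2: "(2 ^ n + 1) ^ m * fact n \<le> 2 ^ ((n + 1) * m) * n ^ n" by (rule nat_bound2)
  have key: "(bd + (2 ^ n + 1) ^ m) * fact n \<le> n ^ N1 * 2 ^ (u - w) + 2 ^ ((n + 1) * m) * n ^ n"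
  proof -
    have "bd * fact n \<le> (n choose m) * ((k * m + 1) * (w + 1) ^ (k * m) * 2 ^ (u - w)) * fact n"
      using bb by simp
    also have "\<dots> = ((n choose m) * (k * m + 1) * (w + 1) ^ (k * m) * fact n) * 2 ^ (u - w)"
      by (simp add: algebra_simps)
    also have "\<dots> \<le> n ^ N1 * 2 ^ (u - w)" using e1 by simp
    finally show ?thesis using e2 by (simp add: algebra_simps)
  qed
  have clpos: "0 < cls"
  proof (rule ccontr)
    assume "\<not> 0 < cls"
    then have "cls = 0" by simp
    then show False using cl by simp
  qed
  have f0: "0 < (fact n :: real)" by simp
  have "real UC / real cls \<le> real (bd + (2 ^ n + 1) ^ m) / real cls"
  proof (rule divide_right_mono)
    show "real UC \<le> real (bd + (2 ^ n + 1) ^ m)" using uc by (simp only: of_nat_le_iff)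
  qed simp
  also have "\<dots> \<le> real (bd + (2 ^ n + 1) ^ m) * fact n / 2 ^ u"
  proof -
    have "(2::real) ^ u \<le> real cls * fact n" using cl by (metis of_nat_fact of_nat_le_iff of_nat_mult of_nat_numeral of_nat_power)
    then have "1 / real cls \<le> fact n / 2 ^ u" using clpos f0
      by (simp add: divide_simps mult.commute)
    then have "real (bd + (2 ^ n + 1) ^ m) * (1 / real cls) \<le> real (bd + (2 ^ n + 1) ^ m) * (fact n / 2 ^ u)"
      by (rule mult_left_mono) simp
    then show ?thesis by simp
  qed
  also have "\<dots> \<le> (real n ^ N1 * 2 ^ (u - w) + 2 ^ ((n + 1) * m) * real n ^ n) / 2 ^ u"
  proof -
    have "real ((bd + (2 ^ n + 1) ^ m) * fact n) \<le> real (n ^ N1 * 2 ^ (u - w) + 2 ^ ((n + 1) * m) * n ^ n)"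
      using key by (simp only: of_nat_le_iff)
    then show ?thesis by (intro divide_right_mono) simp_all
  qed
  also have "\<dots> = real n ^ N1 / 2 ^ w + 2 ^ ((n + 1) * m) * real n ^ n / 2 ^ u"
  proof -
    have "(2::real) ^ u = 2 ^ (u - w) * 2 ^ w" using wu by (simp add: power_add[symmetric])
    then show ?thesis by (simp add: add_divide_distrib)
  qed
  finally have R: "real UC / real cls \<le> real n ^ N1 / 2 ^ w + 2 ^ ((n + 1) * m) * real n ^ n / 2 ^ u" .
  have np: "0 < real n" using n by simp
  have T1: "real n ^ N1 / 2 ^ w \<le> exp ((3 * real k + 2) * real n * ln (real n) - ln 2 * (real n)^2 / 128)"
  proof -
    have "real n ^ N1 / 2 ^ w = exp (real N1 * ln (real n) - real w * ln 2)"
      using pow_exp[OF np, of N1] pow_exp[of 2 w] by (simp add: exp_diff)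
    also have "\<dots> \<le> exp ((3 * real k + 2) * real n * ln (real n) - ln 2 * (real n)^2 / 128)"
    proof -
      have m4: "real n \<le> 4 * real m + 3" unfolding m_def by linarith
      have mm: "real m * real m - real m = 2 * real w" using w2 by (metis of_nat_add of_nat_mult of_nat_numeral add_diff_cancel_right')
      have h1: "(real n - 3) / 4 \<le> real m" using m4 by simp
      have h2: "0 \<le> (real n - 3) / 4" using n by simp
      have h3: "(real n - 7) / 4 \<le> real m - 1" using m4 by simp
      have h4: "0 \<le> (real n - 7) / 4" using n by simp
      have "((real n - 3) / 4) * ((real n - 7) / 4) \<le> real m * (real m - 1)"
        by (rule mult_mono[OF h1 h3]) (use h2 h4 h1 in auto)
      moreover have "(real n)^2 / 64 \<le> ((real n - 3) / 4) * ((real n - 7) / 4)"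
      proof -
        have "0 \<le> real n * (3 * real n - 40) + 84" using n by (intro add_nonneg_nonneg mult_nonneg_nonneg) auto
        then show ?thesis by (simp add: power2_eq_square algebra_simps)
      qed
      ultimately have "(real n)^2 / 128 \<le> real w" using mm by (simp add: algebra_simps)
      then have "ln 2 * (real n)^2 / 128 \<le> real w * ln 2" by (simp add: mult.commute)
      moreover have "real N1 = (3 * real k + 2) * real n" unfolding N1_def by (simp add: algebra_simps)
      ultimately show ?thesis by simp
    qed
    finally show ?thesis .
  qed
  have T2: "2 ^ ((n + 1) * m) * real n ^ n / 2 ^ u \<le> exp (real n * ln (real n) - ln 2 * ((real n)^2 - 3 * real n) / 4)"
  proof -
    have "2 ^ ((n + 1) * m) * real n ^ n / 2 ^ u = exp (real ((n + 1) * m) * ln 2 + real n * ln (real n) - real u * ln 2)"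
      using pow_exp[OF np, of n] pow_exp[of 2 u] pow_exp[of 2 "(n + 1) * m"] by (simp add: exp_diff exp_add)
    also have "\<dots> \<le> exp (real n * ln (real n) - ln 2 * ((real n)^2 - 3 * real n) / 4)"
    proof -
      have m4: "4 * real m \<le> real n" unfolding m_def by linarith
      have uu: "2 * real u = real n * real n - real n" using u2 by (metis of_nat_add of_nat_mult of_nat_numeral add_diff_cancel_right')
      have "real ((n + 1) * m) \<le> (real n + 1) * real n / 4"
        using m4 by (simp add: algebra_simps) (use mult_left_mono[OF m4, of "real n + 1"] in \<open>simp add: algebra_simps\<close>)
      then have "real ((n + 1) * m) - real u \<le> - ((real n)^2 - 3 * real n) / 4"
        using uu by (simp add: power2_eq_square algebra_simps)
      then have "(real ((n + 1) * m) - real u) * ln 2 \<le> (- ((real n)^2 - 3 * real n) / 4) * ln 2"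
        by (rule mult_right_mono) simp
      then have "real ((n + 1) * m) * ln 2 - real u * ln 2 \<le> - (ln 2 * ((real n)^2 - 3 * real n) / 4)"
        by (rule aux_lin)
      then show ?thesis by simp
    qed
    finally show ?thesis .
  qed
  show ?thesis using R T1 T2 unfolding UC_def cls_def by linarith
qed


lemma lim1: "(\<lambda>n::nat. exp ((3*real k+2)*real n*ln (real n) - ln 2 * (real n)^2/128)) \<longlonglongrightarrow> 0"
  by real_asymp

lemma lim2: "(\<lambda>n::nat. exp (real n * ln (real n) - ln 2 * ((real n)^2 - 3 * real n)/4)) \<longlonglongrightarrow> 0"
  by real_asymp

theorem corollary1:
  fixes k :: nat and Q :: "graph set"
  assumes "\<forall>G\<in>Q. wf_graph G \<and> k_degenerate k G"
    and "\<forall>G H. wf_graph G \<longrightarrow> wf_graph H \<longrightarrow> graph_iso G H \<longrightarrow> G \<in> Q \<longrightarrow> H \<in> Q"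
  shows "weakly_distinguishing (indpoly Q)"
  unfolding weakly_distinguishing_def
proof (rule tendsto_sandwich[OF _ _ tendsto_const])
  let ?g = "\<lambda>n::nat. exp ((3*real k+2)*real n*ln (real n) - ln 2 * (real n)^2/128)
      + exp (real n * ln (real n) - ln 2 * ((real n)^2 - 3 * real n)/4)"
  show "?g \<longlonglongrightarrow> 0" using tendsto_add[OF lim1[of k] lim2] by simp
  show "\<forall>\<^sub>F n in sequentially. 0 \<le> real (card (unique_classes (indpoly Q) n)) / real (card (graph_classes n))"
    by simp
  show "\<forall>\<^sub>F n in sequentially. real (card (unique_classes (indpoly Q) n)) / real (card (graph_classes n)) \<le> ?g n"
    using ratio_bound[OF assms(1)] by (intro eventually_sequentiallyI[of 16]) simp
qed

end
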